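(* Let $G=(V,E)$ be a finite trivalent graph (for example, a honeycomb lattice with periodic boundary conditions), with a fixed orientation chosen on each edge, and let $L$ be a finite set of string labels with an involution $i\mapsto i^*$. The Hilbert space is $\bigotimes_{e\in E}\mathbb{C}^{L}$, with orthonormal basis $\{|s\rangle\}$ indexed by configurations $s:E\to L$. Let $\mathcal{B}\subseteq L^3$ be a set of allowed triples (branching rules), and call a configuration $s$ valid if at every vertex $v$ the triple of labels on the three edges incident to $v$ (each label replaced by its dual if the corresponding edge is oriented away from $v$) belongs to $\mathcal{B}$; let $S$ be the set of valid configurations. Assume the string-net is Abelian in the sense that the branching rules have no multiplicity: at every vertex, once the (appropriately dualized) labels on two of the three incident edges are fixed, there is at most one label on the third edge making the triple allowed. Let $|\Phi\rangle=\sum_{s\in S}a(s)|s\rangle$ be the string-net ground state (a normalized state supported only on valid configurations). Let $A\subseteq E$ be a non-empty set of edges that is non-loopy, i.e. the subgraph of $G$ formed by the edges of $A$ contains no cycle, and suppose $B=E\setminus A$ is its complement. Then the reduced density matrix $\rho_A=\mathrm{Tr}_B|\Phi\rangle\langle\Phi|$ is fully separable (with respect to the partition of $A$ into its individual edges), i.e. $\rho_A$ contains no entanglement whatsoever.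
   Context: Matrix elements of the reduced state are $[\rho_A]_{s_A,s_A'}=\sum_{s_B}a(s_A s_B)\,a^*(s_A' s_B)$, where the sum is over configurations $s_B$ of the edges in $B$ with both $(s_A,s_B)\in S$ and $(s_A',s_B)\in S$. A density matrix on $\bigotimes_{e\in A}\mathcal{H}_e$ is fully separable if it is a convex combination of product states $\bigotimes_{e\in A}|\psi_e\rangle\langle\psi_e|$. In the Levin–Wen string-net construction, the fixed-point ground state is determined by tensors $F^{ijm}_{kln}$ and $d_i$ and is supported exactly on configurations satisfying the branching rules at every vertex; only this support property is relevant here. *)

theory Defs
  imports Complex_Main "HOL-Library.FuncSet"
begin

text \<open>A half-edge is a pair (e, out):
(e, True) is the end of e at its tail (so e is oriented away from that vertex),
(e, False) the end at its head. inc v i, for i < 3, enumerates the three half-edges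
at the vertex v (in a fixed order, used to read off the triple of labels at v).\<close>

definition trivalent_graph ::
  "'v set \<Rightarrow> 'e set \<Rightarrow> ('e \<Rightarrow> 'v) \<Rightarrow> ('e \<Rightarrow> 'v) \<Rightarrow> ('v \<Rightarrow> nat \<Rightarrow> 'e \<times> bool) \<Rightarrow> bool" where
  "trivalent_graph V E tail head inc \<longleftrightarrow>
     finite V \<and> finite E \<and>
     (\<forall>e\<in>E. tail e \<in> V \<and> head e \<in> V) \<and>
     (\<forall>v\<in>V. \<forall>i<3. fst (inc v i) \<in> E \<and>
         (if snd (inc v i) then tail (fst (inc v i)) = v else head (fst (inc v i)) = v)) \<and>
     inj_on (\<lambda>(v, i). inc v i) (V \<times> {..<3}) \<and>
     (\<lambda>(v, i). inc v i) ` (V \<times> {..<3}) = E \<times> (UNIV :: bool set)"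

definition slot_label ::
  "('l \<Rightarrow> 'l) \<Rightarrow> ('v \<Rightarrow> nat \<Rightarrow> 'e \<times> bool) \<Rightarrow> ('e \<Rightarrow> 'l) \<Rightarrow> 'v \<Rightarrow> nat \<Rightarrow> 'l" where
  "slot_label dual inc s v i =
     (if snd (inc v i) then dual (s (fst (inc v i))) else s (fst (inc v i)))"

definition valid_configs ::
  "'v set \<Rightarrow> 'e set \<Rightarrow> 'l set \<Rightarrow> ('l \<Rightarrow> 'l) \<Rightarrow> ('v \<Rightarrow> nat \<Rightarrow> 'e \<times> bool)
    \<Rightarrow> ('l \<times> 'l \<times> 'l) set \<Rightarrow> ('e \<Rightarrow> 'l) set" where
  "valid_configs V E L dual inc Br =
     {s \<in> E \<rightarrow>\<^sub>E L. \<forall>v\<in>V.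
        (slot_label dual inc s v 0, slot_label dual inc s v 1, slot_label dual inc s v 2) \<in> Br}"

definition abelian_rules :: "('l \<times> 'l \<times> 'l) set \<Rightarrow> bool" where
  "abelian_rules Br \<longleftrightarrow>
     (\<forall>a b c c'. (a, b, c) \<in> Br \<longrightarrow> (a, b, c') \<in> Br \<longrightarrow> c = c') \<and>
     (\<forall>a b b' c. (a, b, c) \<in> Br \<longrightarrow> (a, b', c) \<in> Br \<longrightarrow> b = b') \<and>
     (\<forall>a a' b c. (a, b, c) \<in> Br \<longrightarrow> (a', b, c) \<in> Br \<longrightarrow> a = a')"

text \<open>The subgraph formed by the edges of A contains a cycle (length \<ge> 1; self-loops and
pairs of parallel edges count as cycles).\<close>
definition has_cycle :: "'e set \<Rightarrow> ('e \<Rightarrow> 'v) \<Rightarrow> ('e \<Rightarrow> 'v) \<Rightarrow> bool" where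
  "has_cycle A tail head \<longleftrightarrow>
     (\<exists>es vs. es \<noteq> [] \<and> length vs = length es \<and> distinct es \<and> distinct vs \<and> set es \<subseteq> A \<and>
        (\<forall>i<length es.
           (tail (es ! i) = vs ! i \<and> head (es ! i) = vs ! ((i + 1) mod length es)) \<or>
           (head (es ! i) = vs ! i \<and> tail (es ! i) = vs ! ((i + 1) mod length es))))"

definition merge_cfg :: "'e set \<Rightarrow> ('e \<Rightarrow> 'l) \<Rightarrow> ('e \<Rightarrow> 'l) \<Rightarrow> ('e \<Rightarrow> 'l)" where
  "merge_cfg A sA sB = (\<lambda>e. if e \<in> A then sA e else sB e)"

definition reduced_dm ::
  "'e set \<Rightarrow> 'e set \<Rightarrow> 'l set \<Rightarrow> (('e \<Rightarrow> 'l) \<Rightarrow> complex) \<Rightarrow> ('e \<Rightarrow> 'l) \<Rightarrow> ('e \<Rightarrow> 'l) \<Rightarrow> complex" where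
  "reduced_dm A B L a sA sA' =
     (\<Sum>sB \<in> B \<rightarrow>\<^sub>E L. a (merge_cfg A sA sB) * cnj (a (merge_cfg A sA' sB)))"

definition unit_vector :: "'l set \<Rightarrow> ('l \<Rightarrow> complex) \<Rightarrow> bool" where
  "unit_vector L \<phi> \<longleftrightarrow> (\<Sum>l\<in>L. (cmod (\<phi> l))\<^sup>2) = 1"

definition product_dm ::
  "'e set \<Rightarrow> ('e \<Rightarrow> 'l \<Rightarrow> complex) \<Rightarrow> ('e \<Rightarrow> 'l) \<Rightarrow> ('e \<Rightarrow> 'l) \<Rightarrow> complex" where
  "product_dm A \<psi> s s' = (\<Prod>e\<in>A. \<psi> e (s e) * cnj (\<psi> e (s' e)))"

definition fully_separable ::
  "'e set \<Rightarrow> 'l set \<Rightarrow> (('e \<Rightarrow> 'l) \<Rightarrow> ('e \<Rightarrow> 'l) \<Rightarrow> complex) \<Rightarrow> bool" where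
  "fully_separable A L \<rho> \<longleftrightarrow>
     (\<exists>(K::nat) (p::nat \<Rightarrow> real) (\<psi>::nat \<Rightarrow> 'e \<Rightarrow> 'l \<Rightarrow> complex).
        (\<forall>k<K. p k \<ge> 0 \<and> (\<forall>e\<in>A. unit_vector L (\<psi> k e))) \<and>
        (\<Sum>k<K. p k) = 1 \<and>
        (\<forall>s\<in>A \<rightarrow>\<^sub>E L. \<forall>s'\<in>A \<rightarrow>\<^sub>E L.
           \<rho> s s' = (\<Sum>k<K. complex_of_real (p k) * product_dm A (\<psi> k) s s')))"

end

theory Submission imports Defs begin

lemma local_unique:
  assumes dual_L: "\<forall>i\<in>L. dual i \<in> L \<and> dual (dual i) = i"
    and abelian: "abelian_rules Br"
    and s: "s \<in> valid_configs V E L dual inc Br" and s': "s' \<in> valid_configs V E L dual inc Br"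
    and v: "v \<in> V" and i: "i < (3::nat)" and eE: "fst (inc v i) \<in> E"
    and oth: "\<forall>j<3. j \<noteq> i \<longrightarrow> s (fst (inc v j)) = s' (fst (inc v j))"
  shows "s (fst (inc v i)) = s' (fst (inc v i))"
proof -
  have t1: "(slot_label dual inc s v 0, slot_label dual inc s v 1, slot_label dual inc s v 2) \<in> Br"
    using s v unfolding valid_configs_def by auto
  have t2: "(slot_label dual inc s' v 0, slot_label dual inc s' v 1, slot_label dual inc s' v 2) \<in> Br"
    using s' v unfolding valid_configs_def by auto
  have eq: "j < 3 \<Longrightarrow> j \<noteq> i \<Longrightarrow> slot_label dual inc s v j = slot_label dual inc s' v j" for j
    using oth unfolding slot_label_def by auto
  have sl: "slot_label dual inc s v i = slot_label dual inc s' v i"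
  proof -
    have "i = 0 \<or> i = 1 \<or> i = 2" using i by auto
    then show ?thesis
    proof (elim disjE)
      assume "i = 0" then show ?thesis using t1 t2 eq[of 1] eq[of 2] abelian unfolding abelian_rules_def by auto
    next
      assume "i = 1" then show ?thesis using t1 t2 eq[of 0] eq[of 2] abelian unfolding abelian_rules_def by auto
    next
      assume "i = 2" then show ?thesis using t1 t2 eq[of 0] eq[of 1] abelian unfolding abelian_rules_def by auto
    qed
  qed
  have inL: "s (fst (inc v i)) \<in> L" "s' (fst (inc v i)) \<in> L"
    using s s' eE unfolding valid_configs_def by auto
  show ?thesis
  proof (cases "snd (inc v i)")
    case True
    then have "dual (s (fst (inc v i))) = dual (s' (fst (inc v i)))" using sl unfolding slot_label_def by auto
    then have "dual (dual (s (fst (inc v i)))) = dual (dual (s' (fst (inc v i))))" by simp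
    then show ?thesis using inL dual_L by auto
  next
    case False
    then show ?thesis using sl unfolding slot_label_def by auto
  qed
qed


definition at_he :: "('e \<Rightarrow> 'v) \<Rightarrow> ('e \<Rightarrow> 'v) \<Rightarrow> 'e \<times> bool \<Rightarrow> 'v" where
  "at_he tail head d = (if snd d then tail (fst d) else head (fst d))"

definition opp :: "'e \<times> bool \<Rightarrow> 'e \<times> bool" where
  "opp d = (fst d, \<not> snd d)"

lemma cycle_from_step:
  fixes ds :: "nat \<Rightarrow> 'e \<times> bool"
  assumes finV: "finite V"
    and inV: "\<And>n. at_he tail head (ds n) \<in> V"
    and inA: "\<And>n. fst (ds n) \<in> A"
    and stp: "\<And>n. at_he tail head (ds (Suc n)) = at_he tail head (opp (ds n))"
    and nb: "\<And>n. ds (Suc n) \<noteq> opp (ds n)"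
  shows "has_cycle A tail head"
proof -
  define vs where "vs n = at_he tail head (ds n)" for n
  have "\<not> inj vs"
  proof
    assume "inj vs"
    then have "infinite (range vs)" using finite_imageD by blast
    moreover have "range vs \<subseteq> V" using inV vs_def by auto
    ultimately show False using finV finite_subset by blast
  qed
  then obtain i0 j0 where "i0 \<noteq> j0" "vs i0 = vs j0" unfolding inj_def by blast
  then have ex: "\<exists>j. \<exists>i<j. vs i = vs j"
    by (metis linorder_neqE_nat)
  define j where "j = (LEAST j. \<exists>i<j. vs i = vs j)"
  have "\<exists>i<j. vs i = vs j" unfolding j_def using ex by (rule LeastI_ex)
  then obtain i where ij: "i < j" and vij: "vs i = vs j" by blast
  have minj: "vs a \<noteq> vs b" if "a < b" "b < j" for a b
  proof
    assume "vs a = vs b"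
    then have "\<exists>i<b. vs i = vs b" using that by blast
    then have "j \<le> b" unfolding j_def by (rule Least_le)
    then show False using that by simp
  qed
  have injv: "vs a = vs b \<Longrightarrow> a < j \<Longrightarrow> b < j \<Longrightarrow> a = b" for a b
    using minj by (metis linorder_neqE_nat)
  have vsuc: "vs (Suc n) = at_he tail head (fst (ds n), \<not> snd (ds n))" for n
    using stp unfolding vs_def opp_def by simp
  define es where "es = map (\<lambda>k. fst (ds k)) [i..<j]"
  define vl where "vl = map vs [i..<j]"
  have d1: "distinct vl" unfolding vl_def
    by (simp add: distinct_map inj_on_def injv)
  have d2: "distinct es" unfolding es_def distinct_map
  proof (simp, rule inj_onI)
    fix k l assume k: "k \<in> {i..<j}" and l: "l \<in> {i..<j}" and e: "fst (ds k) = fst (ds l)"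
    show "k = l"
    proof (rule ccontr)
      assume "k \<noteq> l"
      then consider "k < l" | "l < k" by linarith
      then show False
      proof cases
        case 1
        show False
        proof (cases "snd (ds k) = snd (ds l)")
          case True
          then have "vs k = vs l" unfolding vs_def at_he_def using e by simp
          then show False using injv[of k l] 1 k l by auto
        next
          case False
          then have "vs l = vs (Suc k)" unfolding vsuc unfolding vs_def at_he_def using e by auto
          then have "l = Suc k" using injv[of l "Suc k"] 1 k l by auto
          then have "ds l = opp (ds k)" using e False unfolding opp_def by (cases "ds k", cases "ds l") auto
          then show False using nb \<open>l = Suc k\<close> by blast
        qed
      next
        case 2
        show False
        proof (cases "snd (ds k) = snd (ds l)")
          case True
          then have "vs k = vs l" unfolding vs_def at_he_def using e by simp
          then show False using injv[of k l] 2 k l by auto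
        next
          case False
          then have "vs k = vs (Suc l)" unfolding vsuc unfolding vs_def at_he_def using e by auto
          then have "k = Suc l" using injv[of k "Suc l"] 2 k l by auto
          then have "ds k = opp (ds l)" using e False unfolding opp_def by (cases "ds k", cases "ds l") auto
          then show False using nb \<open>k = Suc l\<close> by blast
        qed
      qed
    qed
  qed
  have len: "length es = j - i" "length vl = j - i" unfolding es_def vl_def by auto
  have cond: "(tail (es ! p) = vl ! p \<and> head (es ! p) = vl ! ((p + 1) mod length es)) \<or>
           (head (es ! p) = vl ! p \<and> tail (es ! p) = vl ! ((p + 1) mod length es))"
    if p: "p < length es" for p
  proof -
    have a1: "es ! p = fst (ds (i + p))" "vl ! p = vs (i + p)" using p len unfolding es_def vl_def by auto
    have a2: "vl ! ((p + 1) mod length es) = vs (Suc (i + p))"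
    proof (cases "p + 1 < j - i")
      case True
      then show ?thesis using len unfolding vl_def by auto
    next
      case False
      then have "p + 1 = j - i" using p len by auto
      then have "(p + 1) mod length es = 0" using len by simp
      moreover have "Suc (i + p) = j" using \<open>p + 1 = j - i\<close> ij by simp
      ultimately show ?thesis using ij vij unfolding vl_def by auto
    qed
    show ?thesis unfolding a1 a2 vsuc unfolding vs_def at_he_def by auto
  qed
  show ?thesis unfolding has_cycle_def
    apply (rule exI[of _ es], rule exI[of _ vl])
    using ij len d1 d2 cond inA unfolding es_def by auto
qed


lemma forced:
  assumes graph: "trivalent_graph V E tail head inc"
    and dual_L: "\<forall>i\<in>L. dual i \<in> L \<and> dual (dual i) = i"
    and abelian: "abelian_rules Br"
    and s: "s \<in> valid_configs V E L dual inc Br" and s': "s' \<in> valid_configs V E L dual inc Br"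
    and agree: "\<forall>e\<in>E - A. s e = s' e"
    and nonloopy: "\<not> has_cycle A tail head"
  shows "s = s'"
proof (rule ccontr)
  assume ne: "s \<noteq> s'"
  define D where "D = {e\<in>E. s e \<noteq> s' e}"
  have sE: "s \<in> E \<rightarrow>\<^sub>E L" "s' \<in> E \<rightarrow>\<^sub>E L" using s s' unfolding valid_configs_def by auto
  have "D \<noteq> {}"
  proof
    assume "D = {}"
    then have "\<forall>e. s e = s' e" using sE unfolding D_def PiE_def extensional_def by (metis (mono_tags, lifting) IntE empty_Collect_eq mem_Collect_eq)
    then show False using ne by auto
  qed
  then obtain e0 where e0: "e0 \<in> D" by blast
  have DA: "D \<subseteq> A" using agree unfolding D_def by auto
  note g = graph[unfolded trivalent_graph_def]
  have surj: "\<exists>v\<in>V. \<exists>i<3. inc v i = (e, b)" if "e \<in> E" for e b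
  proof -
    have "(e, b) \<in> (\<lambda>(v, i). inc v i) ` (V \<times> {..<3})" using g that by auto
    then obtain v i where "v \<in> V" "i < 3" "(e, b) = inc v i" by auto
    then show ?thesis by metis
  qed
  have atinc: "at_he tail head (inc v i) = v" "fst (inc v i) \<in> E" if "v \<in> V" "i < 3" for v i
    using g that unfolding at_he_def by (auto split: if_splits)
  have injinc: "inc v i \<noteq> inc v j" if "v \<in> V" "i < 3" "j < 3" "i \<noteq> j" for v i j
  proof
    assume "inc v i = inc v j"
    moreover have "inj_on (\<lambda>(v, i). inc v i) (V \<times> {..<3})" using g by blast
    ultimately have "(v, i) = (v, j)" using that inj_onD[of "\<lambda>(v, i). inc v i" "V \<times> {..<3}" "(v, i)" "(v, j)"] by auto
    then show False using that by simp
  qed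
  have deg: "\<exists>d'. fst d' \<in> D \<and> at_he tail head d' = at_he tail head (opp d) \<and> d' \<noteq> opp d"
    if d: "fst d \<in> D" for d
  proof -
    have "fst d \<in> E" using d D_def by auto
    then obtain w i where w: "w \<in> V" "i < 3" and wi: "inc w i = opp d"
      using surj[of "fst d" "\<not> snd d"] unfolding opp_def by auto
    have "fst (inc w i) \<in> D" using wi d unfolding opp_def by auto
    then have "s (fst (inc w i)) \<noteq> s' (fst (inc w i))" unfolding D_def by auto
    then have "\<not> (\<forall>j<3. j \<noteq> i \<longrightarrow> s (fst (inc w j)) = s' (fst (inc w j)))"
      using local_unique[OF dual_L abelian s s' w atinc(2)[OF w]] by blast
    then obtain j where j: "j < 3" "j \<noteq> i" "s (fst (inc w j)) \<noteq> s' (fst (inc w j))" by blast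
    have "fst (inc w j) \<in> D" using j atinc(2)[OF w(1) j(1)] unfolding D_def by auto
    moreover have "at_he tail head (inc w j) = at_he tail head (opp d)"
      using atinc(1)[OF w(1) j(1)] atinc(1)[OF w] wi by simp
    moreover have "inc w j \<noteq> opp d" using injinc[OF w(1) j(1) w(2) j(2)] wi by simp
    ultimately show ?thesis by blast
  qed
  define step where "step d = (SOME d'. fst d' \<in> D \<and> at_he tail head d' = at_he tail head (opp d) \<and> d' \<noteq> opp d)" for d
  have stepP: "fst (step d) \<in> D \<and> at_he tail head (step d) = at_he tail head (opp d) \<and> step d \<noteq> opp d"
    if "fst d \<in> D" for d
    unfolding step_def using someI_ex[OF deg[OF that]] .
  define ds where "ds n = (step ^^ n) (e0, True)" for n
  have dsD: "fst (ds n) \<in> D" for n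
    by (induction n) (auto simp: ds_def e0 stepP)
  have dsS: "ds (Suc n) = step (ds n)" for n unfolding ds_def by simp
  have "has_cycle A tail head"
  proof (rule cycle_from_step[of V tail head ds])
    show "finite V" using g by auto
    show "at_he tail head (ds n) \<in> V" for n
      using dsD[of n] g unfolding D_def at_he_def by auto
    show "fst (ds n) \<in> A" for n using dsD DA by auto
    show "at_he tail head (ds (Suc n)) = at_he tail head (opp (ds n))" for n
      using stepP[OF dsD[of n]] dsS by simp
    show "ds (Suc n) \<noteq> opp (ds n)" for n
      using stepP[OF dsD[of n]] dsS by simp
  qed
  then show False using nonloopy by simp
qed


lemma merge_bij:
  assumes "A \<subseteq> E"
  shows "bij_betw (\<lambda>(t, sB). merge_cfg A t sB) ((A \<rightarrow>\<^sub>E L) \<times> ((E - A) \<rightarrow>\<^sub>E L)) (E \<rightarrow>\<^sub>E L)"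
proof (rule bij_betwI')
  fix x y assume x: "x \<in> (A \<rightarrow>\<^sub>E L) \<times> ((E - A) \<rightarrow>\<^sub>E L)" and y: "y \<in> (A \<rightarrow>\<^sub>E L) \<times> ((E - A) \<rightarrow>\<^sub>E L)"
  obtain t sB where xx: "x = (t, sB)" by (cases x)
  obtain t' sB' where yy: "y = (t', sB')" by (cases y)
  show "((case x of (t, sB) \<Rightarrow> merge_cfg A t sB) = (case y of (t, sB) \<Rightarrow> merge_cfg A t sB)) = (x = y)"
  proof
    assume eq: "(case x of (t, sB) \<Rightarrow> merge_cfg A t sB) = (case y of (t, sB) \<Rightarrow> merge_cfg A t sB)"
    have "t = t'"
    proof
      fix e show "t e = t' e"
        using fun_cong[OF eq, of e] x y unfolding xx yy merge_cfg_def PiE_def extensional_def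
        by (cases "e \<in> A") auto
    qed
    moreover have "sB = sB'"
    proof
      fix e show "sB e = sB' e"
        using fun_cong[OF eq, of e] x y unfolding xx yy merge_cfg_def PiE_def extensional_def
        by (cases "e \<in> A") auto
    qed
    ultimately show "x = y" using xx yy by simp
  qed simp
next
  fix x assume x: "x \<in> (A \<rightarrow>\<^sub>E L) \<times> ((E - A) \<rightarrow>\<^sub>E L)"
  then show "(case x of (t, sB) \<Rightarrow> merge_cfg A t sB) \<in> E \<rightarrow>\<^sub>E L"
    using assms unfolding merge_cfg_def PiE_def extensional_def by (cases x) auto
next
  fix s assume s: "s \<in> E \<rightarrow>\<^sub>E L"
  show "\<exists>x\<in>(A \<rightarrow>\<^sub>E L) \<times> ((E - A) \<rightarrow>\<^sub>E L). s = (case x of (t, sB) \<Rightarrow> merge_cfg A t sB)"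
  proof (rule bexI[of _ "(restrict s A, restrict s (E - A))"])
    show "s = (case (restrict s A, restrict s (E - A)) of (t, sB) \<Rightarrow> merge_cfg A t sB)"
      using s assms unfolding merge_cfg_def PiE_def extensional_def by auto
    show "(restrict s A, restrict s (E - A)) \<in> (A \<rightarrow>\<^sub>E L) \<times> ((E - A) \<rightarrow>\<^sub>E L)"
      using s assms by auto
  qed
qed

theorem mainTheorem1:
  fixes V :: "'v set" and E :: "'e set" and tail head :: "'e \<Rightarrow> 'v"
    and inc :: "'v \<Rightarrow> nat \<Rightarrow> 'e \<times> bool"
    and L :: "'l set" and dual :: "'l \<Rightarrow> 'l" and Br :: "('l \<times> 'l \<times> 'l) set"
    and a :: "('e \<Rightarrow> 'l) \<Rightarrow> complex" and A :: "'e set"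
  assumes graph: "trivalent_graph V E tail head inc"
    and finL: "finite L"
    and dual_L: "\<forall>i\<in>L. dual i \<in> L \<and> dual (dual i) = i"
    and Br_L: "Br \<subseteq> L \<times> L \<times> L"
    and abelian: "abelian_rules Br"
    and support: "\<forall>s. s \<notin> valid_configs V E L dual inc Br \<longrightarrow> a s = 0"
    and normalized: "(\<Sum>s\<in>valid_configs V E L dual inc Br. (cmod (a s))\<^sup>2) = 1"
    and A_sub: "A \<subseteq> E" and A_ne: "A \<noteq> {}"
    and nonloopy: "\<not> has_cycle A tail head"
  shows "fully_separable A L (reduced_dm A (E - A) L a)"
proof -
  define S where "S = valid_configs V E L dual inc Br"
  define B where "B = E - A"
  define \<rho> where "\<rho> = reduced_dm A B L a"
  have finE: "finite E" using graph unfolding trivalent_graph_def by blast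
  have finA: "finite A" using finE A_sub finite_subset by blast
  have SE: "S \<subseteq> E \<rightarrow>\<^sub>E L" unfolding S_def valid_configs_def by auto
  define P where "P t = (\<Sum>sB\<in>B \<rightarrow>\<^sub>E L. (cmod (a (merge_cfg A t sB)))\<^sup>2)" for t
  have diag: "\<rho> t t = complex_of_real (P t)" for t
    unfolding \<rho>_def reduced_dm_def P_def of_real_sum complex_norm_square by simp
  have Pnn: "P t \<ge> 0" for t unfolding P_def by (auto intro: sum_nonneg)
  have offdiag: "\<rho> t t' = 0" if t: "t \<in> A \<rightarrow>\<^sub>E L" and t': "t' \<in> A \<rightarrow>\<^sub>E L" and ne: "t \<noteq> t'" for t t'
    unfolding \<rho>_def reduced_dm_def
  proof (rule sum.neutral, rule ballI)
    fix sB assume sB: "sB \<in> B \<rightarrow>\<^sub>E L"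
    show "a (merge_cfg A t sB) * cnj (a (merge_cfg A t' sB)) = 0"
    proof (rule ccontr)
      assume "a (merge_cfg A t sB) * cnj (a (merge_cfg A t' sB)) \<noteq> 0"
      then have "a (merge_cfg A t sB) \<noteq> 0" "a (merge_cfg A t' sB) \<noteq> 0" by auto
      then have v: "merge_cfg A t sB \<in> S" "merge_cfg A t' sB \<in> S" using support S_def by auto
      have "\<forall>e\<in>E - A. merge_cfg A t sB e = merge_cfg A t' sB e" unfolding merge_cfg_def by auto
      then have eq: "merge_cfg A t sB = merge_cfg A t' sB"
        using forced[OF graph dual_L abelian v[unfolded S_def] _ nonloopy] by blast
      have "t = t'"
      proof
        fix e show "t e = t' e"
          using fun_cong[OF eq, of e] t t' unfolding merge_cfg_def PiE_def extensional_def
          by (cases "e \<in> A") auto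
      qed
      then show False using ne by simp
    qed
  qed
  have total: "(\<Sum>t\<in>A \<rightarrow>\<^sub>E L. P t) = 1"
  proof -
    have "(\<Sum>t\<in>A \<rightarrow>\<^sub>E L. P t) = (\<Sum>x\<in>(A \<rightarrow>\<^sub>E L) \<times> (B \<rightarrow>\<^sub>E L). (cmod (a ((\<lambda>(t, sB). merge_cfg A t sB) x)))\<^sup>2)"
      unfolding P_def by (subst sum.cartesian_product) (simp add: case_prod_beta)
    also have "\<dots> = (\<Sum>s\<in>E \<rightarrow>\<^sub>E L. (cmod (a s))\<^sup>2)"
      using sum.reindex_bij_betw[OF merge_bij[OF A_sub, of L], of "\<lambda>s. (cmod (a s))\<^sup>2"]
      unfolding B_def by (simp add: comp_def)
    also have "\<dots> = (\<Sum>s\<in>S. (cmod (a s))\<^sup>2)"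
    proof (rule sum.mono_neutral_right)
      show "finite (E \<rightarrow>\<^sub>E L)" using finE finL by (simp add: finite_PiE)
      show "S \<subseteq> E \<rightarrow>\<^sub>E L" by (rule SE)
      show "\<forall>i\<in>(E \<rightarrow>\<^sub>E L) - S. (cmod (a i))\<^sup>2 = 0" using support S_def by auto
    qed
    also have "\<dots> = 1" using normalized S_def by simp
    finally show ?thesis .
  qed
  have finAL: "finite (A \<rightarrow>\<^sub>E L)" using finA finL by (simp add: finite_PiE)
  obtain h where h: "bij_betw h {0..<card (A \<rightarrow>\<^sub>E L)} (A \<rightarrow>\<^sub>E L)"
    using ex_bij_betw_nat_finite[OF finAL] by blast
  define K where "K = card (A \<rightarrow>\<^sub>E L)"
  define p where "p k = P (h k)" for k
  define \<psi> where "\<psi> k e l = (if l = h k e then (1::complex) else 0)" for k e l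
  have hK: "bij_betw h {..<K} (A \<rightarrow>\<^sub>E L)" using h unfolding K_def by (simp add: atLeast0LessThan)
  have pd: "product_dm A (\<psi> k) s s' = (if s = h k \<and> s' = h k then 1 else 0)"
    if k: "k < K" and s: "s \<in> A \<rightarrow>\<^sub>E L" and s': "s' \<in> A \<rightarrow>\<^sub>E L" for k s s'
  proof -
    have hk: "h k \<in> A \<rightarrow>\<^sub>E L" using hK k bij_betw_apply by fastforce
    show ?thesis
    proof (cases "s = h k \<and> s' = h k")
      case True
      then show ?thesis unfolding product_dm_def \<psi>_def by simp
    next
      case False
      then obtain e where e: "e \<in> A" "s e \<noteq> h k e \<or> s' e \<noteq> h k e"
        using s s' hk by (metis PiE_ext)
      have "product_dm A (\<psi> k) s s' = 0" unfolding product_dm_def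
        by (rule prod_zero) (use finA e in \<open>auto simp: \<psi>_def intro!: bexI[of _ e]\<close>)
      then show ?thesis using False by simp
    qed
  qed
  show ?thesis unfolding fully_separable_def
    apply (rule exI[of _ K], rule exI[of _ p], rule exI[of _ \<psi>])
  proof (intro conjI ballI)
    show "\<forall>k<K. 0 \<le> p k \<and> (\<forall>e\<in>A. unit_vector L (\<psi> k e))"
    proof (intro allI impI conjI ballI)
      fix k show "0 \<le> p k" unfolding p_def by (rule Pnn)
    next
      fix k e assume k: "k < K" and e: "e \<in> A"
      have "h k e \<in> L" using hK k e bij_betw_apply by fastforce
      have eq: "(\<lambda>l. (cmod (\<psi> k e l))\<^sup>2) = (\<lambda>l. if l = h k e then 1 else 0)"
        unfolding \<psi>_def by auto
      show "unit_vector L (\<psi> k e)" unfolding unit_vector_def eq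
        using finL \<open>h k e \<in> L\<close> by (simp add: sum.delta')
    qed
    show "(\<Sum>k<K. p k) = 1" unfolding p_def
      using sum.reindex_bij_betw[OF hK, of P] total by simp
    fix s s' assume s: "s \<in> A \<rightarrow>\<^sub>E L" and s': "s' \<in> A \<rightarrow>\<^sub>E L"
    have "(\<Sum>k<K. complex_of_real (p k) * product_dm A (\<psi> k) s s')
        = (\<Sum>k<K. complex_of_real (P (h k)) * (if s = h k \<and> s' = h k then 1 else 0))"
      using pd s s' unfolding p_def by (intro sum.cong) auto
    also have "\<dots> = (\<Sum>t\<in>A \<rightarrow>\<^sub>E L. complex_of_real (P t) * (if s = t \<and> s' = t then 1 else 0))"
      using sum.reindex_bij_betw[OF hK, of "\<lambda>t. complex_of_real (P t) * (if s = t \<and> s' = t then 1 else 0)"] by simp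
    also have "\<dots> = \<rho> s s'"
    proof (cases "s = s'")
      case True
      have "(\<Sum>t\<in>A \<rightarrow>\<^sub>E L. complex_of_real (P t) * (if s = t \<and> s' = t then 1 else 0))
          = (\<Sum>t\<in>A \<rightarrow>\<^sub>E L. (if s = t then complex_of_real (P t) else 0))"
        using True by (intro sum.cong) auto
      also have "\<dots> = complex_of_real (P s)" using s finAL by (simp add: sum.delta)
      finally show ?thesis using diag True by simp
    next
      case False
      have "(\<Sum>t\<in>A \<rightarrow>\<^sub>E L. complex_of_real (P t) * (if s = t \<and> s' = t then 1 else 0)) = 0"
        using False by (intro sum.neutral) auto
      then show ?thesis using offdiag[OF s s' False] by simp
    qed
    finally show "reduced_dm A (E - A) L a s s' = (\<Sum>k<K. complex_of_real (p k) * product_dm A (\<psi> k) s s')"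
      unfolding \<rho>_def B_def by simp
  qed
qed

end
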